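(* Let $\mathsf T$ be a quantifier-free transduction, $\Pi$ a hereditary class property, $f:\mathbb N\to\mathbb N$ non-decreasing and $p$ a positive integer. If a class $\mathscr C$ has an $f$-bounded $\Pi$-decomposition with parameter $p$, then $\mathsf T(\mathscr C)$ has an $f$-bounded $\mathsf T(\Pi)$-decomposition with parameter $p$, where $\mathsf T(\Pi)=\{\mathscr D:\exists\mathscr D'\in\Pi\text{ with }\mathscr D\subseteq\mathsf T(\mathscr D')\}$.
   Context: Graphs are finite and simple. For a set $\Sigma$ of unary relation symbols, a $\Sigma$-expansion of a graph interprets these predicates on its vertex set. A simple interpretation $\mathsf I=(\nu(x),\eta(x,y))$ is a pair of first-order formulas in the language of $\Sigma$-expanded graphs with $\eta$ symmetric and anti-reflexive; $\mathsf I(G^+)$ has vertex set $\nu(G^+)$ and edge set $\eta(G^+)\cap\nu(G^+)^2$. A transduction $\mathsf T$ maps $G$ to $\mathsf T(G)=\{\mathsf I(G^+):G^+$ a $\Sigma$-expansion of $G\}$, and $\mathsf T(\mathscr D)=\bigcup_{G\in\mathscr D}\mathsf T(G)$; it is quantifier-free if $\nu,\eta$ are quantifier-free. A hereditary class is a class closed under isomorphism and induced subgraphs; a hereditary class property is a set $\Pi$ of hereditary classes closed under passing to hereditary subclasses. A class $\mathscr C$ has an $f$-bounded $\Pi$-decomposition with parameter $p$ if there is $\mathscr D_p\in\Pi$ such that every $G\in\mathscr C$ has a partition $V_1,\dots,V_N$ of $V(G)$ with $N\le f(|G|)$ and $G[V_{i_1}\cup\dots\cup V_{i_p}]\in\mathscr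 D_p$ for all $i_1,\dots,i_p\in[N]$ (this definition is applied verbatim with $\mathsf T(\Pi)$ in place of $\Pi$). *)

theory Defs
  imports Main
begin

type_synonym graph = "nat set \<times> (nat \<Rightarrow> nat \<Rightarrow> bool)"

definition verts :: "graph \<Rightarrow> nat set" where "verts G = fst G"
definition adj :: "graph \<Rightarrow> nat \<Rightarrow> nat \<Rightarrow> bool" where "adj G = snd G"

definition is_graph :: "graph \<Rightarrow> bool" where
  "is_graph G \<longleftrightarrow> finite (verts G)
     \<and> (\<forall>a b. adj G a b \<longrightarrow> a \<in> verts G \<and> b \<in> verts G)
     \<and> (\<forall>a b. adj G a b \<longrightarrow> adj G b a)
     \<and> (\<forall>a. \<not> adj G a a)"

definition induced :: "graph \<Rightarrow> nat set \<Rightarrow> graph" where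
  "induced G U = (verts G \<inter> U, \<lambda>a b. a \<in> U \<and> b \<in> U \<and> adj G a b)"

definition graph_iso :: "graph \<Rightarrow> graph \<Rightarrow> bool" where
  "graph_iso G H \<longleftrightarrow> (\<exists>h. bij_betw h (verts G) (verts H)
     \<and> (\<forall>a\<in>verts G. \<forall>b\<in>verts G. adj G a b \<longleftrightarrow> adj H (h a) (h b)))"

definition hereditary_class :: "graph set \<Rightarrow> bool" where
  "hereditary_class C \<longleftrightarrow> (\<forall>G\<in>C. is_graph G)
     \<and> (\<forall>G\<in>C. \<forall>H. is_graph H \<and> graph_iso G H \<longrightarrow> H \<in> C)
     \<and> (\<forall>G\<in>C. \<forall>U. U \<subseteq> verts G \<longrightarrow> induced G U \<in> C)"

definition hereditary_property :: "graph set set \<Rightarrow> bool" where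
  "hereditary_property \<Pi> \<longleftrightarrow> (\<forall>D\<in>\<Pi>. hereditary_class D)
     \<and> (\<forall>D\<in>\<Pi>. \<forall>D'. hereditary_class D' \<and> D' \<subseteq> D \<longrightarrow> D' \<in> \<Pi>)"

datatype fo =
    FFalse
  | Eq nat nat
  | Adj nat nat
  | Pred nat nat          (* Pred i x : x satisfies unary predicate i *)
  | Neg fo
  | Conj fo fo
  | Disj fo fo
  | Ex nat fo

fun qfree :: "fo \<Rightarrow> bool" where
  "qfree (Neg \<phi>) = qfree \<phi>"
| "qfree (Conj \<phi> \<psi>) = (qfree \<phi> \<and> qfree \<psi>)"
| "qfree (Disj \<phi> \<psi>) = (qfree \<phi> \<and> qfree \<psi>)"
| "qfree (Ex x \<phi>) = False"
| "qfree _ = True"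

fun fvars :: "fo \<Rightarrow> nat set" where
  "fvars FFalse = {}"
| "fvars (Eq x y) = {x, y}"
| "fvars (Adj x y) = {x, y}"
| "fvars (Pred i x) = {x}"
| "fvars (Neg \<phi>) = fvars \<phi>"
| "fvars (Conj \<phi> \<psi>) = fvars \<phi> \<union> fvars \<psi>"
| "fvars (Disj \<phi> \<psi>) = fvars \<phi> \<union> fvars \<psi>"
| "fvars (Ex x \<phi>) = fvars \<phi> - {x}"

fun preds :: "fo \<Rightarrow> nat set" where
  "preds (Pred i x) = {i}"
| "preds (Neg \<phi>) = preds \<phi>"
| "preds (Conj \<phi> \<psi>) = preds \<phi> \<union> preds \<psi>"
| "preds (Disj \<phi> \<psi>) = preds \<phi> \<union> preds \<psi>"
| "preds (Ex x \<phi>) = preds \<phi>"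
| "preds _ = {}"

fun sat :: "graph \<Rightarrow> (nat \<Rightarrow> nat set) \<Rightarrow> (nat \<Rightarrow> nat) \<Rightarrow> fo \<Rightarrow> bool" where
  "sat G P s FFalse = False"
| "sat G P s (Eq x y) = (s x = s y)"
| "sat G P s (Adj x y) = adj G (s x) (s y)"
| "sat G P s (Pred i x) = (s x \<in> P i)"
| "sat G P s (Neg \<phi>) = (\<not> sat G P s \<phi>)"
| "sat G P s (Conj \<phi> \<psi>) = (sat G P s \<phi> \<and> sat G P s \<psi>)"
| "sat G P s (Disj \<phi> \<psi>) = (sat G P s \<phi> \<or> sat G P s \<psi>)"
| "sat G P s (Ex x \<phi>) = (\<exists>a\<in>verts G. sat G P (s(x := a)) \<phi>)"

definition expansion :: "nat set \<Rightarrow> graph \<Rightarrow> (nat \<Rightarrow> nat set) \<Rightarrow> bool" where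
  "expansion \<Sigma> G P \<longleftrightarrow> (\<forall>i\<in>\<Sigma>. P i \<subseteq> verts G) \<and> (\<forall>i. i \<notin> \<Sigma> \<longrightarrow> P i = {})"

text \<open>A transduction is given by (Sigma, nu, eta); nu(x) has free variable 0 = x,
eta(x,y) has free variables 0 = x and 1 = y.\<close>

type_synonym transduction = "nat set \<times> fo \<times> fo"

definition asg2 :: "nat \<Rightarrow> nat \<Rightarrow> nat \<Rightarrow> nat" where
  "asg2 a b = (\<lambda>i. if i = 0 then a else b)"

definition is_transduction :: "transduction \<Rightarrow> bool" where
  "is_transduction T \<longleftrightarrow> (case T of (\<Sigma>, \<nu>, \<eta>) \<Rightarrow>
      finite \<Sigma> \<and> preds \<nu> \<subseteq> \<Sigma> \<and> preds \<eta> \<subseteq> \<Sigma>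
    \<and> fvars \<nu> \<subseteq> {0} \<and> fvars \<eta> \<subseteq> {0, 1}
    \<and> (\<forall>G P a b. sat G P (asg2 a b) \<eta> \<longleftrightarrow> sat G P (asg2 b a) \<eta>)
    \<and> (\<forall>G P a. \<not> sat G P (asg2 a a) \<eta>))"

definition quantifier_free :: "transduction \<Rightarrow> bool" where
  "quantifier_free T \<longleftrightarrow> (case T of (\<Sigma>, \<nu>, \<eta>) \<Rightarrow> qfree \<nu> \<and> qfree \<eta>)"

definition interp :: "transduction \<Rightarrow> graph \<Rightarrow> (nat \<Rightarrow> nat set) \<Rightarrow> graph" where
  "interp T G P = (case T of (\<Sigma>, \<nu>, \<eta>) \<Rightarrow>
     let V' = {v \<in> verts G. sat G P (\<lambda>_. v) \<nu>} in
     (V', \<lambda>a b. a \<in> V' \<and> b \<in> V' \<and> sat G P (asg2 a b) \<eta>))"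

definition trans_graph :: "transduction \<Rightarrow> graph \<Rightarrow> graph set" where
  "trans_graph T G = {H. is_graph H \<and>
     (\<exists>P. expansion (fst T) G P \<and> graph_iso (interp T G P) H)}"

definition trans_class :: "transduction \<Rightarrow> graph set \<Rightarrow> graph set" where
  "trans_class T D = (\<Union>G\<in>D. trans_graph T G)"

definition trans_property :: "transduction \<Rightarrow> graph set set \<Rightarrow> graph set set" where
  "trans_property T \<Pi> = {D. \<exists>D'\<in>\<Pi>. D \<subseteq> trans_class T D'}"

definition has_decomposition ::
  "(nat \<Rightarrow> nat) \<Rightarrow> graph set set \<Rightarrow> nat \<Rightarrow> graph set \<Rightarrow> bool" where
  "has_decomposition f \<Pi> p C \<longleftrightarrow> (\<exists>D\<in>\<Pi>. \<forall>G\<in>C. \<exists>N Vs.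
      N \<le> f (card (verts G))
    \<and> (\<Union>i\<in>{1..N}. Vs i) = verts G
    \<and> (\<forall>i\<in>{1..N}. \<forall>j\<in>{1..N}. i \<noteq> j \<longrightarrow> Vs i \<inter> Vs j = {})
    \<and> (\<forall>is. length is = p \<and> set is \<subseteq> {1..N} \<longrightarrow>
          induced G (\<Union>i\<in>set is. Vs i) \<in> D))"

end

theory Submission
  imports Defs
begin

lemma sat_qf:
  assumes "qfree \<phi>" "\<forall>x. s x \<in> S" "\<forall>i. \<forall>v\<in>S. (v \<in> P i) = (v \<in> P' i)"
    "\<forall>a\<in>S. \<forall>b\<in>S. adj G a b = adj G' a b"
  shows "sat G P s \<phi> = sat G' P' s \<phi>"
  using assms by (induction \<phi>) auto

lemma is_graph_induced: "is_graph G \<Longrightarrow> is_graph (induced G U)"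
  unfolding is_graph_def induced_def verts_def adj_def by auto

theorem mainTheorem13:
  fixes T :: transduction and \<Pi> :: "graph set set" and f :: "nat \<Rightarrow> nat"
    and p :: nat and C :: "graph set"
  assumes "is_transduction T" and "quantifier_free T"
    and "hereditary_property \<Pi>"
    and "mono f" and "p > 0"
    and "hereditary_class C"
    and "has_decomposition f \<Pi> p C"
  shows "has_decomposition f (trans_property T \<Pi>) p (trans_class T C)"
proof -
  obtain \<Sigma> \<nu> \<eta> where T: "T = (\<Sigma>, \<nu>, \<eta>)" by (cases T) auto
  from assms(2) have qf: "qfree \<nu>" "qfree \<eta>" by (simp_all add: quantifier_free_def T)
  from assms(7) obtain D0 where D0: "D0 \<in> \<Pi>" and dec: "\<forall>G\<in>C. \<exists>N Vs.
      N \<le> f (card (verts G))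
    \<and> (\<Union>i\<in>{1..N}. Vs i) = verts G
    \<and> (\<forall>i\<in>{1..N}. \<forall>j\<in>{1..N}. i \<noteq> j \<longrightarrow> Vs i \<inter> Vs j = {})
    \<and> (\<forall>xs. length xs = p \<and> set xs \<subseteq> {1..N} \<longrightarrow>
          induced G (\<Union>i\<in>set xs. Vs i) \<in> D0)"
    unfolding has_decomposition_def by blast
  show ?thesis unfolding has_decomposition_def
  proof (rule bexI[of _ "trans_class T D0"])
    show "trans_class T D0 \<in> trans_property T \<Pi>" using D0 unfolding trans_property_def by blast
    show "\<forall>H\<in>trans_class T C. \<exists>N Vs.
      N \<le> f (card (verts H))
    \<and> (\<Union>i\<in>{1..N}. Vs i) = verts H
    \<and> (\<forall>i\<in>{1..N}. \<forall>j\<in>{1..N}. i \<noteq> j \<longrightarrow> Vs i \<inter> Vs j = {})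
    \<and> (\<forall>xs. length xs = p \<and> set xs \<subseteq> {1..N} \<longrightarrow>
          induced H (\<Union>i\<in>set xs. Vs i) \<in> trans_class T D0)"
    proof
      fix H assume "H \<in> trans_class T C"
      then obtain G P where G: "G \<in> C" and Hg: "is_graph H" and exp: "expansion \<Sigma> G P"
        and iso: "graph_iso (interp T G P) H"
        unfolding trans_class_def trans_graph_def T by auto
      define U where "U = {v \<in> verts G. sat G P (\<lambda>_. v) \<nu>}"
      have I: "interp T G P = (U, \<lambda>a b. a \<in> U \<and> b \<in> U \<and> sat G P (asg2 a b) \<eta>)"
        unfolding interp_def T U_def by simp
      from iso obtain h where h: "bij_betw h U (verts H)"
        and hadj: "\<forall>a\<in>U. \<forall>b\<in>U. sat G P (asg2 a b) \<eta> = adj H (h a) (h b)"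
        unfolding graph_iso_def I verts_def adj_def by auto
      have UG: "U \<subseteq> verts G" unfolding U_def by auto
      define G' where "G' = induced G U"
      have G'C: "G' \<in> C" using assms(6) G UG unfolding hereditary_class_def G'_def by blast
      have vG': "verts G' = U" using UG unfolding G'_def induced_def verts_def by auto
      have cardeq: "card (verts G') = card (verts H)" using vG' h bij_betw_same_card by metis
      from bspec[OF dec G'C] obtain N Vs where N: "N \<le> f (card (verts G'))"
        and cov: "(\<Union>i\<in>{1..N}. Vs i) = verts G'"
        and disj: "\<forall>i\<in>{1..N}. \<forall>j\<in>{1..N}. i \<noteq> j \<longrightarrow> Vs i \<inter> Vs j = {}"
        and ind: "\<forall>xs. length xs = p \<and> set xs \<subseteq> {1..N} \<longrightarrow>
          induced G' (\<Union>i\<in>set xs. Vs i) \<in> D0" by (elim exE conjE)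
      have VsU: "\<And>i. i \<in> {1..N} \<Longrightarrow> Vs i \<subseteq> U" using cov vG' by blast
      have inj: "inj_on h U" using bij_betw_imp_inj_on[OF h] .
      have hU: "h ` U = verts H" using bij_betw_imp_surj_on[OF h] .
      show "\<exists>N Vs.
      N \<le> f (card (verts H))
    \<and> (\<Union>i\<in>{1..N}. Vs i) = verts H
    \<and> (\<forall>i\<in>{1..N}. \<forall>j\<in>{1..N}. i \<noteq> j \<longrightarrow> Vs i \<inter> Vs j = {})
    \<and> (\<forall>xs. length xs = p \<and> set xs \<subseteq> {1..N} \<longrightarrow>
          induced H (\<Union>i\<in>set xs. Vs i) \<in> trans_class T D0)"
      proof (intro exI[of _ N] exI[of _ "\<lambda>i. h ` Vs i"] conjI allI impI ballI)
        show "N \<le> f (card (verts H))" using N cardeq by simp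
        have "(\<Union>i\<in>{1..N}. h ` Vs i) = h ` (\<Union>i\<in>{1..N}. Vs i)" by blast
        then show "(\<Union>i\<in>{1..N}. h ` Vs i) = verts H" using cov vG' hU by simp
      next
        fix i j assume ij: "i \<in> {1..N}" "j \<in> {1..N}" "i \<noteq> j"
        have "h ` Vs i \<inter> h ` Vs j = h ` (Vs i \<inter> Vs j)"
          using inj_on_image_Int[OF inj VsU[OF ij(1)] VsU[OF ij(2)]] by simp
        then show "h ` Vs i \<inter> h ` Vs j = {}" using disj ij by simp
      next
        fix xs :: "nat list" assume xs: "length xs = p \<and> set xs \<subseteq> {1..N}"
        define S where "S = (\<Union>i\<in>set xs. Vs i)"
        have SU: "S \<subseteq> U" using xs VsU unfolding S_def by blast
        have hS: "(\<Union>i\<in>set xs. h ` Vs i) = h ` S" unfolding S_def by blast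
        define G'' where "G'' = induced G' S"
        have G''D: "G'' \<in> D0" using ind xs unfolding G''_def S_def by blast
        define P'' where "P'' = (\<lambda>i. P i \<inter> S)"
        have vG'': "verts G'' = S" using SU vG' unfolding G''_def induced_def verts_def by auto
        have aG'': "\<forall>a\<in>S. \<forall>b\<in>S. adj G'' a b = adj G a b"
          using SU unfolding G''_def G'_def induced_def adj_def by auto
        have PP: "\<forall>i. \<forall>v\<in>S. (v \<in> P'' i) = (v \<in> P i)" unfolding P''_def by auto
        have nu: "\<And>v. v \<in> S \<Longrightarrow> sat G'' P'' (\<lambda>_. v) \<nu> = sat G P (\<lambda>_. v) \<nu>"
          by (rule sat_qf[OF qf(1)]) (use PP aG'' in auto)
        have eta: "\<And>a b. a \<in> S \<Longrightarrow> b \<in> S \<Longrightarrow> sat G'' P'' (asg2 a b) \<eta> = sat G P (asg2 a b) \<eta>"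
          by (rule sat_qf[OF qf(2)]) (use PP aG'' in \<open>auto simp: asg2_def\<close>)
        have vS: "{v \<in> verts G''. sat G'' P'' (\<lambda>_. v) \<nu>} = S"
          using vG'' nu SU unfolding U_def by auto
        have I'': "interp T G'' P'' = (S, \<lambda>a b. a \<in> S \<and> b \<in> S \<and> sat G P (asg2 a b) \<eta>)"
        proof -
          have "interp T G'' P'' = ({v \<in> verts G''. sat G'' P'' (\<lambda>_. v) \<nu>},
            \<lambda>a b. a \<in> {v \<in> verts G''. sat G'' P'' (\<lambda>_. v) \<nu>} \<and> b \<in> {v \<in> verts G''. sat G'' P'' (\<lambda>_. v) \<nu>}
               \<and> sat G'' P'' (asg2 a b) \<eta>)"
            by (simp only: interp_def T Let_def prod.case)
          then show ?thesis unfolding vS using eta by (auto simp: fun_eq_iff)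
        qed
        have expn: "expansion (fst T) G'' P''"
          using exp vG'' unfolding expansion_def T P''_def by auto
        have vH: "verts (induced H (h ` S)) = h ` S" using SU hU unfolding induced_def verts_def by auto
        have bS: "bij_betw h S (h ` S)" using inj_on_subset[OF inj SU] by (simp add: bij_betw_def)
        have isoS: "graph_iso (interp T G'' P'') (induced H (h ` S))"
          unfolding graph_iso_def
        proof (intro exI[of _ h] conjI)
          show "bij_betw h (verts (interp T G'' P'')) (verts (induced H (h ` S)))"
            using bS vH I'' unfolding verts_def by simp
          show "\<forall>a\<in>verts (interp T G'' P''). \<forall>b\<in>verts (interp T G'' P'').
                 adj (interp T G'' P'') a b = adj (induced H (h ` S)) (h a) (h b)"
            using I'' hadj SU unfolding verts_def adj_def induced_def by auto
        qed
        show "induced H (\<Union>i\<in>set xs. h ` Vs i) \<in> trans_class T D0"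
          unfolding hS trans_class_def trans_graph_def
          using G''D is_graph_induced[OF Hg] expn isoS by blast
      qed
    qed
  qed
qed

end
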